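(* Let the existence, consistency and well-configuredness assumptions below hold. Suppose $f(x)=\sum_{i=1}^m f_i(x_i)$ is strictly convex on $\mathbb{R}^{mn}$ and each $f_i$ is convex for all $i\in\mathcal{V}$. Then for any given $x(0)$, the distributed update $$\dot{x}_i(t) = -\nabla f_i(x_i(t)) - \sum_{j\in\mathcal{N}_i} P_{ij}(\lambda_i(t)-\lambda_j(t)) - \sum_{j\in\mathcal{N}_i} P_{ij}(x_i(t)-x_j(t)-\bar b_{ij}),\qquad \dot{\lambda}_i(t) = \sum_{j\in\mathcal{N}_i} P_{ij}(x_i(t)-x_j(t)-\bar b_{ij}),$$ with $P_{ij} = A_{ij}'(A_{ij}A_{ij}')^{-1}A_{ij}$ and $\bar b_{ij} = A_{ij}'(A_{ij}A_{ij}')^{-1}b_{ij}$, drives each $x_i(t)$ to converge asymptotically to a constant $x_i^*$, $i\in\mathcal{V}$, such that $(x_1^*,\dots,x_m^* )$ solves $$\min_{x_1,\dots,x_m}\ \sum_{i=1}^m f_i(x_i)\quad \text{s.t.}\quad A_{ij}(x_i-x_j)=b_{ij},\ \forall (i,j)\in\mathcal{E}.$$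
   Context: A multi-agent system of $m$ agents $\mathcal{V}=\{1,\dots,m\}$; agent $i$ is a single integrator with state $x_i\in\mathbb{R}^n$ and communicates bidirectionally with neighbors $\mathcal{N}_i$ ($i\notin\mathcal{N}_i$); $\mathbb{G}=\{\mathcal{V},\mathcal{E}\}$ is the undirected graph with $\bar m=|\mathcal{E}|$ edges. Each $f_i:\mathbb{R}^n\to\mathbb{R}$ is continuously differentiable and convex, known only to agent $i$. $A_{ij}\in\mathbb{R}^{d_{ij}\times n}$, $b_{ij}\in\mathbb{R}^{d_{ij}}$ are constant, known to agent $i$ (with $A_{ij}A_{ij}'$ invertible). $x=\mathrm{col}\{x_1,\dots,x_m\}$, $\lambda=\mathrm{col}\{\lambda_1,\dots,\lambda_m\}\in\mathbb{R}^{mn}$ are Lagrange multipliers. Let $H\in\mathbb{R}^{\bar m\times m}$ be the oriented incidence matrix of $\mathbb{G}$ (orientations consistent with the $b_{ij}$), $\bar H = H\otimes I_n$, $\bar P=\mathrm{diag}\{P_{i_1j_1},\dots,P_{i_{\bar m}j_{\bar m}}\}$, $\bar b = \mathrm{col}\{\bar b_{i_1j_1},\dots,\bar b_{i_{\bar m}j_{\bar m}}\}$ where $(i_l,j_l)$ is the $l$-th edge. Assumptions: (Existence) the optimization problem has at least one solution satisfying the edge agreements; (Consistency) $A_{ij}=A_{ji}$, $b_{ij}=-b_{ji}$ for all $(i,j)\in\mathcal{E}$; (Well-configured) $\mathbb{G}$ is connected and $\ker \bar H' \cap \mathrm{image}\,\bar P = \{0\}$. The update is the saddle-point (gradient descent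 in $x$, ascent in $\lambda$) dynamics of the augmented Lagrangian $F(x,\lambda)=f(x)+\lambda'\bar H'\bar P(\bar Hx-\bar b)+\tfrac12\|\bar P(\bar Hx-\bar b)\|^2$. *)

theory Defs
  imports "HOL-Analysis.Analysis" "Jordan_Normal_Form.Matrix"
begin

text \<open>An agent's constraint matrix A_ij in R^(d x n) is given by its list of d rs
  (each row a vector in R^n, represented as real^'n); b_ij in R^d is a list of length d.\<close>

definition Amul :: "(real^'n) list \<Rightarrow> real^'n \<Rightarrow> real list" where
  "Amul rs x = map (\<lambda>r. inner r x) rs"

definition ATmul :: "(real^'n) list \<Rightarrow> real list \<Rightarrow> real^'n" where
  "ATmul rs c = (\<Sum>k<length rs. (c ! k) *\<^sub>R (rs ! k))"

definition gram :: "(real^'n) list \<Rightarrow> real mat" where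
  "gram rs = mat (length rs) (length rs) (\<lambda>(k,l). inner (rs ! k) (rs ! l))"

text \<open>(A A')^{-1} (well defined when A A' is invertible).\<close>
definition gram_inv :: "(real^'n) list \<Rightarrow> real mat" where
  "gram_inv rs = (THE M. M \<in> carrier_mat (length rs) (length rs) \<and>
      gram rs * M = 1\<^sub>m (length rs) \<and> M * gram rs = 1\<^sub>m (length rs))"

definition Ginv_mul :: "(real^'n) list \<Rightarrow> real list \<Rightarrow> real list" where
  "Ginv_mul rs c = map (\<lambda>k. \<Sum>l<length rs. gram_inv rs $$ (k,l) * c ! l) [0..<length rs]"

definition Pmul :: "(real^'n) list \<Rightarrow> real^'n \<Rightarrow> real^'n" where
  "Pmul rs x = ATmul rs (Ginv_mul rs (Amul rs x))"

definition bbar :: "(real^'n) list \<Rightarrow> real list \<Rightarrow> real^'n" where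
  "bbar rs b = ATmul rs (Ginv_mul rs b)"

definition strict_convex_fun :: "('a::real_vector \<Rightarrow> real) \<Rightarrow> bool" where
  "strict_convex_fun f \<longleftrightarrow> (\<forall>x y u. x \<noteq> y \<and> 0 < u \<and> u < 1 \<longrightarrow>
      f (u *\<^sub>R x + (1 - u) *\<^sub>R y) < u * f x + (1 - u) * f y)"

definition connected_graph :: "('v \<Rightarrow> 'v \<Rightarrow> bool) \<Rightarrow> bool" where
  "connected_graph adj \<longleftrightarrow> (\<forall>i j. adj\<^sup>*\<^sup>* i j)"

definition orientation :: "('v \<Rightarrow> 'v \<Rightarrow> bool) \<Rightarrow> ('v \<times> 'v) list \<Rightarrow> bool" where
  "orientation adj es \<longleftrightarrow> distinct es \<and> (\<forall>(i,j)\<in>set es. adj i j) \<and>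
     (\<forall>i j. adj i j \<longrightarrow> ((i,j) \<in> set es \<or> (j,i) \<in> set es)) \<and>
     (\<forall>i j. \<not> ((i,j) \<in> set es \<and> (j,i) \<in> set es))"

definition incidence :: "('v \<times> 'v) list \<Rightarrow> nat \<Rightarrow> 'v \<Rightarrow> real" where
  "incidence es l v = (if v = fst (es ! l) then 1 else if v = snd (es ! l) then -1 else 0)"

text \<open>ker (H \<otimes> I_n)' \<inter> image Pbar = {0}, where y = col{y_1,...,y_mbar} in R^(mbar n),
  Pbar = diag{P_{i_1 j_1},...}, and ((H \<otimes> I_n)' y)_v = \<Sum>_l H l v y_l.\<close>
definition well_configured ::
  "('v::finite \<times> 'v) list \<Rightarrow> ('v \<Rightarrow> 'v \<Rightarrow> (real^'n) list) \<Rightarrow> bool" where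
  "well_configured es A \<longleftrightarrow> (\<forall>y :: nat \<Rightarrow> real^'n.
      (\<forall>l<length es. y l \<in> range (Pmul (A (fst (es!l)) (snd (es!l))))) \<and>
      (\<forall>v. (\<Sum>l<length es. incidence es l v *\<^sub>R y l) = 0)
      \<longrightarrow> (\<forall>l<length es. y l = 0))"

definition feasible ::
  "('v \<Rightarrow> 'v \<Rightarrow> bool) \<Rightarrow> ('v \<Rightarrow> 'v \<Rightarrow> (real^'n) list) \<Rightarrow> ('v \<Rightarrow> 'v \<Rightarrow> real list)
    \<Rightarrow> ('v \<Rightarrow> real^'n) \<Rightarrow> bool" where
  "feasible adj A b x \<longleftrightarrow> (\<forall>i j. adj i j \<longrightarrow> Amul (A i j) (x i - x j) = b i j)"

definition solves_problem ::
  "('v::finite \<Rightarrow> real^'n \<Rightarrow> real) \<Rightarrow> ('v \<Rightarrow> 'v \<Rightarrow> bool) \<Rightarrow> ('v \<Rightarrow> 'v \<Rightarrow> (real^'n) list)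
    \<Rightarrow> ('v \<Rightarrow> 'v \<Rightarrow> real list) \<Rightarrow> ('v \<Rightarrow> real^'n) \<Rightarrow> bool" where
  "solves_problem f adj A b x \<longleftrightarrow> feasible adj A b x \<and>
     (\<forall>y. feasible adj A b y \<longrightarrow> (\<Sum>i\<in>UNIV. f i (x i)) \<le> (\<Sum>i\<in>UNIV. f i (y i)))"

end

theory Submission
  imports Defs
begin



lemma gram_inv_carrier:
  assumes "invertible_mat (gram rs)"
  shows "gram_inv rs \<in> carrier_mat (length rs) (length rs) \<and>
      gram rs * gram_inv rs = 1\<^sub>m (length rs) \<and> gram_inv rs * gram rs = 1\<^sub>m (length rs)"
proof -
  let ?d = "length rs" and ?G = "gram rs"
  have Gc: "?G \<in> carrier_mat ?d ?d" by (simp add: gram_def)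
  obtain B where B1: "?G * B = 1\<^sub>m ?d" and B2: "B * ?G = 1\<^sub>m (dim_row B)"
    using assms Gc unfolding invertible_mat_def inverts_mat_def by auto
  have "dim_col B = ?d" using B1 by (metis index_mult_mat(3) index_one_mat(3))
  moreover have "dim_row B = ?d" using B2 Gc by (metis carrier_matD(2) index_mult_mat(3) index_one_mat(3))
  ultimately have Bc: "B \<in> carrier_mat ?d ?d" by auto
  have P: "B \<in> carrier_mat ?d ?d \<and> ?G * B = 1\<^sub>m ?d \<and> B * ?G = 1\<^sub>m ?d"
    using Bc B1 B2 by auto
  have U: "M = B" if "M \<in> carrier_mat ?d ?d \<and> ?G * M = 1\<^sub>m ?d \<and> M * ?G = 1\<^sub>m ?d" for M
  proof -
    have "dim_col M = ?d" using that by auto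
    then have "M = M * (?G * B)" using B1 by simp
    also have "\<dots> = (M * ?G) * B" using that Gc Bc by (metis assoc_mult_mat)
    also have "\<dots> = B" using that Bc by simp
    finally show ?thesis .
  qed
  have "gram_inv rs = B" unfolding gram_inv_def
    using P U by (rule the_equality) 
  with P show ?thesis by simp
qed

lemma gram_inv_idx:
  assumes "invertible_mat (gram rs)" and "k < length rs" and "m < length rs"
  shows "(\<Sum>l<length rs. inner (rs!k) (rs!l) * gram_inv rs $$ (l,m)) = (if k=m then 1 else 0)"
    and "(\<Sum>l<length rs. gram_inv rs $$ (k,l) * inner (rs!l) (rs!m)) = (if k=m then 1 else 0)"
proof -
  let ?d = "length rs" and ?G = "gram rs" and ?M = "gram_inv rs"
  note C = gram_inv_carrier[OF assms(1)]
  have "(?G * ?M) $$ (k,m) = (if k=m then 1 else 0)" using C assms by simp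
  moreover have "(?G * ?M) $$ (k,m) = (\<Sum>l<?d. inner (rs!k) (rs!l) * ?M $$ (l,m))"
    using C[THEN conjunct1] assms by (simp add: scalar_prod_def gram_def lessThan_atLeast0)
  ultimately show "(\<Sum>l<length rs. inner (rs!k) (rs!l) * gram_inv rs $$ (l,m)) = (if k=m then 1 else 0)" by simp
  have "(?M * ?G) $$ (k,m) = (if k=m then 1 else 0)" using C assms by simp
  moreover have "(?M * ?G) $$ (k,m) = (\<Sum>l<?d. ?M $$ (k,l) * inner (rs!l) (rs!m))"
    using C[THEN conjunct1] assms by (simp add: scalar_prod_def gram_def lessThan_atLeast0)
  ultimately show "(\<Sum>l<length rs. gram_inv rs $$ (k,l) * inner (rs!l) (rs!m)) = (if k=m then 1 else 0)" by simp
qed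

lemma sum_delta_mult:
  fixes g :: "nat \<Rightarrow> real"
  assumes "finite S"
  shows "(\<Sum>l\<in>S. (if k = l then 1 else 0) * g l) = (if k \<in> S then g k else 0)"
    and "(\<Sum>l\<in>S. (if l = k then 1 else 0) * g l) = (if k \<in> S then g k else 0)"
    and "(\<Sum>l\<in>S. g l * (if k = l then 1 else 0)) = (if k \<in> S then g k else 0)"
    and "(\<Sum>l\<in>S. g l * (if l = k then 1 else 0)) = (if k \<in> S then g k else 0)"
proof -
  have "(\<Sum>l\<in>S. (if k = l then 1 else 0) * g l) = (\<Sum>l\<in>S. if k = l then g k else 0)"
    by (rule sum.cong) auto
  then show "(\<Sum>l\<in>S. (if k = l then 1 else 0) * g l) = (if k \<in> S then g k else 0)" using assms by simp
  have "(\<Sum>l\<in>S. (if l = k then 1 else 0) * g l) = (\<Sum>l\<in>S. if k = l then g k else 0)"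
    by (rule sum.cong) auto
  then show "(\<Sum>l\<in>S. (if l = k then 1 else 0) * g l) = (if k \<in> S then g k else 0)" using assms by simp
  have "(\<Sum>l\<in>S. g l * (if k = l then 1 else 0)) = (\<Sum>l\<in>S. if k = l then g k else 0)"
    by (rule sum.cong) auto
  then show "(\<Sum>l\<in>S. g l * (if k = l then 1 else 0)) = (if k \<in> S then g k else 0)" using assms by simp
  have "(\<Sum>l\<in>S. g l * (if l = k then 1 else 0)) = (\<Sum>l\<in>S. if k = l then g k else 0)"
    by (rule sum.cong) auto
  then show "(\<Sum>l\<in>S. g l * (if l = k then 1 else 0)) = (if k \<in> S then g k else 0)" using assms by simp
qed

lemma Pmul_expand:
  "Pmul rs x = (\<Sum>k<length rs. (\<Sum>l<length rs. gram_inv rs $$ (k,l) * inner (rs!l) x) *\<^sub>R rs!k)"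
  unfolding Pmul_def ATmul_def Ginv_mul_def Amul_def by simp

lemma Pmul_inner:
  "inner u (Pmul rs x) = (\<Sum>k<length rs. \<Sum>l<length rs. gram_inv rs $$ (k,l) * inner (rs!l) x * inner (rs!k) u)"
  unfolding Pmul_expand by (simp add: inner_sum_right sum_distrib_left inner_commute ac_simps)

lemma Pmul_blin: "bounded_linear (Pmul rs)"
  unfolding Pmul_expand[abs_def]
  by (intro bounded_linear_sum bounded_linear_compose[OF bounded_linear_scaleR_left] bounded_linear_compose[OF bounded_linear_mult_right] bounded_linear_inner_right)

lemma Pmul_lin: "linear (Pmul rs)"
  using Pmul_blin bounded_linear.linear by blast

lemma gram_inv_sym:
  assumes "invertible_mat (gram rs)" "a < length rs" "b < length rs"
  shows "gram_inv rs $$ (a,b) = gram_inv rs $$ (b,a)"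
proof -
  let ?d = "length rs" and ?M = "\<lambda>k l. gram_inv rs $$ (k,l)" and ?G = "\<lambda>k l. inner (rs!k) (rs!l)"
  have S: "(\<Sum>k<?d. (\<Sum>l<?d. ?M l b * ?G l k) * ?M k a) = (\<Sum>l<?d. ?M l b * (\<Sum>k<?d. ?G l k * ?M k a))"
    by (simp add: sum_distrib_left sum_distrib_right mult.assoc) (rule sum.swap)
  have L: "(\<Sum>k<?d. (\<Sum>l<?d. ?M l b * ?G l k) * ?M k a) = ?M b a"
  proof -
    have "(\<Sum>k<?d. (\<Sum>l<?d. ?M l b * ?G l k) * ?M k a) = (\<Sum>k<?d. (if k = b then 1 else 0) * ?M k a)"
    proof (rule sum.cong[OF refl])
      fix k assume k: "k \<in> {..<?d}"
      have "(\<Sum>l<?d. ?M l b * ?G l k) = (\<Sum>l<?d. ?G k l * ?M l b)"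
        by (simp add: inner_commute mult.commute)
      also have "\<dots> = (if k = b then 1 else 0)" using gram_inv_idx(1)[OF assms(1) _ assms(3)] k by simp
      finally show "(\<Sum>l<?d. ?M l b * ?G l k) * ?M k a = (if k = b then 1 else 0) * ?M k a" by simp
    qed
    also have "\<dots> = ?M b a" using assms(3) by (simp add: sum_delta_mult)
    finally show ?thesis .
  qed
  have R: "(\<Sum>l<?d. ?M l b * (\<Sum>k<?d. ?G l k * ?M k a)) = ?M a b"
  proof -
    have "(\<Sum>l<?d. ?M l b * (\<Sum>k<?d. ?G l k * ?M k a)) = (\<Sum>l<?d. ?M l b * (if l = a then 1 else 0))"
      by (rule sum.cong[OF refl]) (use gram_inv_idx(1)[OF assms(1) _ assms(2)] in simp)
    also have "\<dots> = ?M a b" using assms(2) by (simp add: sum_delta_mult)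
    finally show ?thesis .
  qed
  show ?thesis using S L R by simp
qed

lemma Pmul_sym:
  assumes "invertible_mat (gram rs)"
  shows "inner u (Pmul rs x) = inner (Pmul rs u) x"
proof -
  have "inner u (Pmul rs x) = (\<Sum>k<length rs. \<Sum>l<length rs. gram_inv rs $$ (k,l) * inner (rs!l) x * inner (rs!k) u)"
    by (rule Pmul_inner)
  also have "\<dots> = (\<Sum>l<length rs. \<Sum>k<length rs. gram_inv rs $$ (k,l) * inner (rs!l) x * inner (rs!k) u)"
    by (rule sum.swap)
  also have "\<dots> = (\<Sum>l<length rs. \<Sum>k<length rs. gram_inv rs $$ (l,k) * inner (rs!k) u * inner (rs!l) x)"
    by (intro sum.cong refl) (simp add: gram_inv_sym[OF assms])
  also have "\<dots> = inner x (Pmul rs u)" by (rule Pmul_inner[symmetric])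
  finally show ?thesis by (simp add: inner_commute)
qed

lemma Pmul_psd:
  assumes "invertible_mat (gram rs)"
  shows "0 \<le> inner x (Pmul rs x)" and "inner x (Pmul rs x) = 0 \<Longrightarrow> (\<forall>r\<in>set rs. inner r x = 0)"
proof -
  let ?d = "length rs" and ?M = "\<lambda>k l. gram_inv rs $$ (k,l)"
  define a where "a l = inner (rs!l) x" for l
  define z where "z k = (\<Sum>l<?d. ?M k l * a l)" for k
  define w where "w = (\<Sum>m<?d. z m *\<^sub>R rs!m)"
  have ak: "a k = inner (rs!k) w" if k: "k < ?d" for k
  proof -
    have "inner (rs!k) w = (\<Sum>m<?d. inner (rs!k) (rs!m) * (\<Sum>l<?d. ?M m l * a l))"
      by (simp add: w_def z_def inner_sum_right mult.commute)
    also have "\<dots> = (\<Sum>l<?d. (\<Sum>m<?d. inner (rs!k) (rs!m) * ?M m l) * a l)"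
      by (simp add: sum_distrib_left sum_distrib_right mult.assoc) (rule sum.swap)
    also have "\<dots> = (\<Sum>l<?d. (if k = l then 1 else 0) * a l)"
      by (rule sum.cong[OF refl]) (use gram_inv_idx(1)[OF assms k] in simp)
    also have "\<dots> = a k" using k by (simp add: sum_delta_mult)
    finally show ?thesis by simp
  qed
  have E: "inner x (Pmul rs x) = inner w w"
  proof -
    have "inner x (Pmul rs x) = (\<Sum>k<?d. z k * a k)"
      unfolding Pmul_inner z_def a_def by (simp add: sum_distrib_right sum_distrib_left mult.commute mult.left_commute)
    also have "\<dots> = (\<Sum>k<?d. z k * inner (rs!k) w)" by (intro sum.cong refl) (simp add: ak)
    also have "\<dots> = inner w w" by (simp add: w_def inner_sum_left)
    finally show ?thesis .
  qed
  show "0 \<le> inner x (Pmul rs x)" using E by simp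
  assume "inner x (Pmul rs x) = 0"
  then have "w = 0" using E by simp
  show "\<forall>r\<in>set rs. inner r x = 0"
  proof
    fix r assume "r \<in> set rs"
    then obtain k where "k < ?d" "r = rs!k" by (auto simp: in_set_conv_nth)
    then show "inner r x = 0" using ak[of k] \<open>w = 0\<close> by (simp add: a_def)
  qed
qed




lemma line_deriv:
  fixes f :: "'v::finite \<Rightarrow> real^'n \<Rightarrow> real" and gradf :: "'v \<Rightarrow> real^'n \<Rightarrow> real^'n"
  assumes grad: "\<And>i z. (f i has_derivative (\<lambda>h. inner (gradf i z) h)) (at z)"
  shows "((\<lambda>t. \<Sum>i\<in>UNIV. f i (p i + t *\<^sub>R d i)) has_real_derivative
           (\<Sum>i\<in>UNIV. inner (gradf i (p i + t0 *\<^sub>R d i)) (d i))) (at t0)"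
proof -
  have "((\<lambda>t. f i (p i + t *\<^sub>R d i)) has_real_derivative inner (gradf i (p i + t0 *\<^sub>R d i)) (d i)) (at t0)" for i
  proof -
    have L: "((\<lambda>t. p i + t *\<^sub>R d i) has_derivative (\<lambda>s. s *\<^sub>R d i)) (at t0)"
      by (auto intro!: derivative_eq_intros)
    have "((\<lambda>t. f i (p i + t *\<^sub>R d i)) has_derivative (\<lambda>s. inner (gradf i (p i + t0 *\<^sub>R d i)) (s *\<^sub>R d i))) (at t0)"
      using has_derivative_compose[OF L grad] .
    moreover have "(\<lambda>s. inner (gradf i (p i + t0 *\<^sub>R d i)) (s *\<^sub>R d i)) = (*) (inner (gradf i (p i + t0 *\<^sub>R d i)) (d i))"
      by (auto simp: fun_eq_iff)
    ultimately show ?thesis by (simp add: has_field_derivative_def)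
  qed
  then show ?thesis by (intro DERIV_sum) auto
qed

lemma tan_ineq:
  fixes f :: "'v::finite \<Rightarrow> real^'n \<Rightarrow> real" and gradf :: "'v \<Rightarrow> real^'n \<Rightarrow> real^'n"
  assumes grad: "\<And>i z. (f i has_derivative (\<lambda>h. inner (gradf i z) h)) (at z)"
    and strict: "strict_convex_fun (\<lambda>X :: real^'n^'v. \<Sum>i\<in>UNIV. f i (X $ i))"
  shows "(\<Sum>i\<in>UNIV. inner (gradf i (p i)) (q i - p i)) \<le> (\<Sum>i\<in>UNIV. f i (q i)) - (\<Sum>i\<in>UNIV. f i (p i))"
    and "p \<noteq> q \<Longrightarrow> (\<Sum>i\<in>UNIV. inner (gradf i (p i)) (q i - p i)) < (\<Sum>i\<in>UNIV. f i (q i)) - (\<Sum>i\<in>UNIV. f i (p i))"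
proof -
  let ?F = "\<lambda>p. \<Sum>i\<in>UNIV. f i (p i)"
  have A: "?F (\<lambda>i. p i + t *\<^sub>R (q i - p i)) < t * ?F q + (1 - t) * ?F p"
    if pq: "p \<noteq> q" and t: "0 < t" "t < 1" for p q :: "'v \<Rightarrow> real^'n" and t :: real
  proof -
    let ?X = "\<chi> i. q i" and ?Y = "\<chi> i. p i"
    have "?X \<noteq> ?Y" using pq by (auto simp: vec_eq_iff fun_eq_iff) metis
    then have "(\<Sum>i\<in>UNIV. f i ((t *\<^sub>R ?X + (1 - t) *\<^sub>R ?Y) $ i)) < t * (\<Sum>i\<in>UNIV. f i (?X $ i)) + (1 - t) * (\<Sum>i\<in>UNIV. f i (?Y $ i))"
      using strict t unfolding strict_convex_fun_def by blast
    moreover have "(t *\<^sub>R ?X + (1 - t) *\<^sub>R ?Y) $ i = p i + t *\<^sub>R (q i - p i)" for i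
      by (simp add: algebra_simps)
    ultimately show ?thesis by simp
  qed
  have B: "(\<Sum>i\<in>UNIV. inner (gradf i (p i)) (q i - p i)) \<le> ?F q - ?F p" for p q :: "'v \<Rightarrow> real^'n"
  proof (cases "p = q")
    case True then show ?thesis by simp
  next
    case False
    let ?D = "\<Sum>i\<in>UNIV. inner (gradf i (p i)) (q i - p i)"
    let ?psi = "\<lambda>t. ?F (\<lambda>i. p i + t *\<^sub>R (q i - p i))"
    have "(?psi has_real_derivative (\<Sum>i\<in>UNIV. inner (gradf i (p i + 0 *\<^sub>R (q i - p i))) (q i - p i))) (at 0)"
      by (rule line_deriv[OF grad])
    then have "(?psi has_real_derivative ?D) (at 0 within {0<..})"
      by (simp add: has_field_derivative_at_within)
    then have lim: "((\<lambda>y. (?psi y - ?psi 0) / (y - 0)) \<longlongrightarrow> ?D) (at_right 0)"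
      by (simp add: has_field_derivative_iff)
    have ev: "eventually (\<lambda>y. (?psi y - ?psi 0) / (y - 0) \<le> ?F q - ?F p) (at_right (0::real))"
      unfolding eventually_at_right_field
    proof (intro exI[of _ 1] conjI allI impI)
      fix y :: real assume y: "0 < y" "y < 1"
      have "?psi y < y * ?F q + (1 - y) * ?F p" using A[OF False y] .
      moreover have "?psi 0 = ?F p" by simp
      ultimately have "?psi y - ?psi 0 \<le> y * (?F q - ?F p)" by (simp add: algebra_simps)
      then show "(?psi y - ?psi 0) / (y - 0) \<le> ?F q - ?F p" using y by (simp add: divide_le_eq mult.commute)
    qed simp
    show ?thesis using tendsto_upperbound[OF lim ev] by simp
  qed
  show "(\<Sum>i\<in>UNIV. inner (gradf i (p i)) (q i - p i)) \<le> ?F q - ?F p" by (rule B)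
  assume pq: "p \<noteq> q"
  define m where "m i = p i + (1/2) *\<^sub>R (q i - p i)" for i
  have "?F m < (1/2) * ?F q + (1 - 1/2) * ?F p" unfolding m_def by (rule A[OF pq]) auto
  moreover have "(\<Sum>i\<in>UNIV. inner (gradf i (p i)) (m i - p i)) \<le> ?F m - ?F p" by (rule B)
  moreover have "(\<Sum>i\<in>UNIV. inner (gradf i (p i)) (m i - p i)) = (1/2) * (\<Sum>i\<in>UNIV. inner (gradf i (p i)) (q i - p i))"
    by (simp add: m_def sum_distrib_left)
  ultimately show "(\<Sum>i\<in>UNIV. inner (gradf i (p i)) (q i - p i)) < ?F q - ?F p" by simp
qed

lemma grad_mono:
  fixes f :: "'v::finite \<Rightarrow> real^'n \<Rightarrow> real" and gradf :: "'v \<Rightarrow> real^'n \<Rightarrow> real^'n"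
  assumes grad: "\<And>i z. (f i has_derivative (\<lambda>h. inner (gradf i z) h)) (at z)"
    and strict: "strict_convex_fun (\<lambda>X :: real^'n^'v. \<Sum>i\<in>UNIV. f i (X $ i))"
  shows "0 \<le> (\<Sum>i\<in>UNIV. inner (q i - p i) (gradf i (q i) - gradf i (p i)))"
    and "p \<noteq> q \<Longrightarrow> 0 < (\<Sum>i\<in>UNIV. inner (q i - p i) (gradf i (q i) - gradf i (p i)))"
proof -
  have E: "(\<Sum>i\<in>UNIV. inner (q i - p i) (gradf i (q i) - gradf i (p i))) =
     - ((\<Sum>i\<in>UNIV. inner (gradf i (p i)) (q i - p i)) + (\<Sum>i\<in>UNIV. inner (gradf i (q i)) (p i - q i)))"
    by (simp add: sum_negf[symmetric] sum.distrib[symmetric] inner_diff_right inner_diff_left inner_commute algebra_simps)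
  note T1 = tan_ineq[OF grad strict, of p q] and T2 = tan_ineq[OF grad strict, of q p]
  show "0 \<le> (\<Sum>i\<in>UNIV. inner (q i - p i) (gradf i (q i) - gradf i (p i)))"
    using E T1(1) T2(1) by linarith
  assume "p \<noteq> q"
  then show "0 < (\<Sum>i\<in>UNIV. inner (q i - p i) (gradf i (q i) - gradf i (p i)))"
    using E T1(2) T2(2) by fastforce
qed




definition lap :: "('v \<Rightarrow> 'v \<Rightarrow> bool) \<Rightarrow> ('v \<Rightarrow> 'v \<Rightarrow> (real^'n) list) \<Rightarrow> ('v \<Rightarrow> real^'n) \<Rightarrow> 'v \<Rightarrow> real^'n" where
  "lap adj A u i = (\<Sum>j\<in>{j. adj i j}. Pmul (A i j) (u i - u j))"

lemma sum_adj:
  fixes g :: "'v::finite \<Rightarrow> 'a::comm_monoid_add"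
  shows "(\<Sum>j\<in>{j. adj i j}. g j) = (\<Sum>j\<in>UNIV. if adj i j then g j else 0)"
  by (simp add: sum.If_cases)

lemma Pmul_neg: "Pmul rs (- x) = - Pmul rs x"
  using linear_neg[OF Pmul_lin] .
lemma Pmul_diff: "Pmul rs (x - y) = Pmul rs x - Pmul rs y"
  using linear_diff[OF Pmul_lin] .
lemma Pmul_add: "Pmul rs (x + y) = Pmul rs x + Pmul rs y"
  using linear_add[OF Pmul_lin] .
lemma Pmul_scale: "Pmul rs (c *\<^sub>R x) = c *\<^sub>R Pmul rs x"
  using linear_scale[OF Pmul_lin] .

lemma lap_diff: "lap adj A (\<lambda>i. u i - v i) i = lap adj A u i - lap adj A v i"
  unfolding lap_def sum_subtractf[symmetric]
proof (intro sum.cong refl)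
  fix j
  have "u i - v i - (u j - v j) = (u i - u j) - (v i - v j)" by (simp add: algebra_simps)
  then show "Pmul (A i j) (u i - v i - (u j - v j)) = Pmul (A i j) (u i - u j) - Pmul (A i j) (v i - v j)"
    by (simp only: Pmul_diff)
qed

lemma lap_quad:
  fixes adj :: "'v::finite \<Rightarrow> 'v \<Rightarrow> bool"
  assumes sym: "\<And>i j. adj i j \<Longrightarrow> adj j i"
    and Asym: "\<And>i j. adj i j \<Longrightarrow> A i j = A j i"
  shows "(\<Sum>i\<in>UNIV. inner (w i) (lap adj A u i)) =
     (1/2) * (\<Sum>i\<in>UNIV. \<Sum>j\<in>UNIV. if adj i j then inner (w i - w j) (Pmul (A i j) (u i - u j)) else 0)"
proof -
  define T where "T i j = (if adj i j then inner (w i) (Pmul (A i j) (u i - u j)) else 0)" for i j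
  have L: "(\<Sum>i\<in>UNIV. inner (w i) (lap adj A u i)) = (\<Sum>i\<in>UNIV. \<Sum>j\<in>UNIV. T i j)"
    unfolding lap_def T_def by (simp add: sum_adj inner_sum_right if_distrib cong: if_cong)
  have "(\<Sum>i\<in>UNIV. \<Sum>j\<in>UNIV. T i j) = (\<Sum>j\<in>UNIV. \<Sum>i\<in>UNIV. T i j)" by (rule sum.swap)
  also have "\<dots> = (\<Sum>i\<in>UNIV. \<Sum>j\<in>UNIV. if adj i j then - inner (w j) (Pmul (A i j) (u i - u j)) else 0)"
  proof (intro sum.cong refl)
    fix i j
    show "T j i = (if adj i j then - inner (w j) (Pmul (A i j) (u i - u j)) else 0)"
    proof (cases "adj i j")
      case True
      then have "adj j i" "A j i = A i j" using sym Asym by auto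
      moreover have "u j - u i = - (u i - u j)" by simp
      ultimately show ?thesis using True unfolding T_def by (simp only: Pmul_neg inner_minus_right if_True)
    next
      case False
      then have "\<not> adj j i" using sym by auto
      then show ?thesis using False unfolding T_def by simp
    qed
  qed
  finally have R: "(\<Sum>i\<in>UNIV. \<Sum>j\<in>UNIV. T i j) = (\<Sum>i\<in>UNIV. \<Sum>j\<in>UNIV. if adj i j then - inner (w j) (Pmul (A i j) (u i - u j)) else 0)" .
  have "2 * (\<Sum>i\<in>UNIV. \<Sum>j\<in>UNIV. T i j) = (\<Sum>i\<in>UNIV. \<Sum>j\<in>UNIV. T i j + (if adj i j then - inner (w j) (Pmul (A i j) (u i - u j)) else 0))"
    using R by (simp add: sum.distrib)
  also have "\<dots> = (\<Sum>i\<in>UNIV. \<Sum>j\<in>UNIV. if adj i j then inner (w i - w j) (Pmul (A i j) (u i - u j)) else 0)"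
    by (intro sum.cong refl) (simp add: T_def inner_diff_left)
  finally show ?thesis using L by simp
qed

lemma lap_props:
  fixes adj :: "'v::finite \<Rightarrow> 'v \<Rightarrow> bool"
  assumes sym: "\<And>i j. adj i j \<Longrightarrow> adj j i"
    and Asym: "\<And>i j. adj i j \<Longrightarrow> A i j = A j i"
    and inv: "\<And>i j. adj i j \<Longrightarrow> invertible_mat (gram (A i j))"
  shows "(\<Sum>i\<in>UNIV. inner (w i) (lap adj A u i)) = (\<Sum>i\<in>UNIV. inner (u i) (lap adj A w i))"
    and "0 \<le> (\<Sum>i\<in>UNIV. inner (u i) (lap adj A u i))"
    and "(\<Sum>i\<in>UNIV. inner (u i) (lap adj A u i)) = 0 \<Longrightarrow> adj i j \<Longrightarrow> \<forall>r\<in>set (A i j). inner r (u i - u j) = 0"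
proof -
  have "(\<Sum>i\<in>UNIV. inner (w i) (lap adj A u i)) =
     (1/2) * (\<Sum>i\<in>UNIV. \<Sum>j\<in>UNIV. if adj i j then inner (w i - w j) (Pmul (A i j) (u i - u j)) else 0)"
    by (rule lap_quad[OF sym Asym])
  also have "\<dots> = (1/2) * (\<Sum>i\<in>UNIV. \<Sum>j\<in>UNIV. if adj i j then inner (u i - u j) (Pmul (A i j) (w i - w j)) else 0)"
    by (intro arg_cong[where f="\<lambda>x. (1/2) * x"] sum.cong refl) (metis Pmul_sym[OF inv] inner_commute)
  also have "\<dots> = (\<Sum>i\<in>UNIV. inner (u i) (lap adj A w i))"
    by (rule lap_quad[OF sym Asym, symmetric])
  finally show "(\<Sum>i\<in>UNIV. inner (w i) (lap adj A u i)) = (\<Sum>i\<in>UNIV. inner (u i) (lap adj A w i))" .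
  have nn: "0 \<le> (if adj i j then inner (u i - u j) (Pmul (A i j) (u i - u j)) else 0)" for i j
    using Pmul_psd(1)[OF inv] by auto
  have Q: "(\<Sum>i\<in>UNIV. inner (u i) (lap adj A u i)) =
     (1/2) * (\<Sum>i\<in>UNIV. \<Sum>j\<in>UNIV. if adj i j then inner (u i - u j) (Pmul (A i j) (u i - u j)) else 0)"
    by (rule lap_quad[OF sym Asym])
  show "0 \<le> (\<Sum>i\<in>UNIV. inner (u i) (lap adj A u i))"
    unfolding Q using nn by (intro mult_nonneg_nonneg sum_nonneg) auto
  assume z: "(\<Sum>i\<in>UNIV. inner (u i) (lap adj A u i)) = 0" and a: "adj i j"
  have "(\<Sum>i\<in>UNIV. \<Sum>j\<in>UNIV. if adj i j then inner (u i - u j) (Pmul (A i j) (u i - u j)) else 0) = 0"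
    using z unfolding Q by simp
  then have "\<forall>i\<in>UNIV. (\<Sum>j\<in>UNIV. if adj i j then inner (u i - u j) (Pmul (A i j) (u i - u j)) else 0) = 0"
    using nn by (subst (asm) sum_nonneg_eq_0_iff) (auto intro: sum_nonneg)
  then have "(\<Sum>j\<in>UNIV. if adj i j then inner (u i - u j) (Pmul (A i j) (u i - u j)) else 0) = 0" by blast
  then have "(if adj i j then inner (u i - u j) (Pmul (A i j) (u i - u j)) else 0) = 0"
    using nn by (subst (asm) sum_nonneg_eq_0_iff) auto
  then have "inner (u i - u j) (Pmul (A i j) (u i - u j)) = 0" using a by simp
  then show "\<forall>r\<in>set (A i j). inner r (u i - u j) = 0" using Pmul_psd(2)[OF inv[OF a]] by blast
qed

lemma Pmul_zero: "\<forall>r\<in>set rs. inner r v = 0 \<Longrightarrow> Pmul rs v = 0"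
  unfolding Pmul_expand by (auto intro!: sum.neutral)




lemma lap_add: "lap adj A (\<lambda>i. u i + v i) i = lap adj A u i + lap adj A v i"
  unfolding lap_def sum.distrib[symmetric]
proof (intro sum.cong refl)
  fix j
  have "u i + v i - (u j + v j) = (u i - u j) + (v i - v j)" by (simp add: algebra_simps)
  then show "Pmul (A i j) (u i + v i - (u j + v j)) = Pmul (A i j) (u i - u j) + Pmul (A i j) (v i - v j)"
    by (simp only: Pmul_add)
qed

lemma lap_scale: "lap adj A (\<lambda>i. c *\<^sub>R u i) i = c *\<^sub>R lap adj A u i"
  unfolding lap_def scaleR_sum_right
proof (intro sum.cong refl)
  fix j
  have "c *\<^sub>R u i - c *\<^sub>R u j = c *\<^sub>R (u i - u j)" by (simp add: algebra_simps)
  then show "Pmul (A i j) (c *\<^sub>R u i - c *\<^sub>R u j) = c *\<^sub>R Pmul (A i j) (u i - u j)"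
    by (simp only: Pmul_scale)
qed

lemma kkt:
  fixes f :: "'v::finite \<Rightarrow> real^'n \<Rightarrow> real" and gradf :: "'v \<Rightarrow> real^'n \<Rightarrow> real^'n"
    and adj :: "'v \<Rightarrow> 'v \<Rightarrow> bool"
  assumes grad: "\<And>i z. (f i has_derivative (\<lambda>h. inner (gradf i z) h)) (at z)"
    and sym: "\<And>i j. adj i j \<Longrightarrow> adj j i"
    and Asym: "\<And>i j. adj i j \<Longrightarrow> A i j = A j i"
    and inv: "\<And>i j. adj i j \<Longrightarrow> invertible_mat (gram (A i j))"
    and sol: "solves_problem f adj A b xs"
  shows "\<exists>ls. \<forall>i. gradf i (xs i) + lap adj A ls i = 0"
proof -
  define Lv :: "real^'n^'v \<Rightarrow> real^'n^'v" where "Lv U = (\<chi> i. lap adj A (\<lambda>j. U $ j) i)" for U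
  have lin: "linear Lv"
  proof (rule linearI)
    fix U V :: "real^'n^'v"
    show "Lv (U + V) = Lv U + Lv V"
    proof -
      have e: "(($) (U + V)) = (\<lambda>j. U $ j + V $ j)" by auto
      show ?thesis unfolding Lv_def by (subst Finite_Cartesian_Product.vec_eq_iff) (simp only: e lap_add vector_add_component vec_lambda_beta, simp)
    qed
  next
    fix c :: real and U :: "real^'n^'v"
    show "Lv (c *\<^sub>R U) = c *\<^sub>R Lv U"
    proof -
      have e: "(($) (c *\<^sub>R U)) = (\<lambda>j. c *\<^sub>R U $ j)" by auto
      show ?thesis unfolding Lv_def by (subst Finite_Cartesian_Product.vec_eq_iff) (simp only: e lap_scale vector_scaleR_component vec_lambda_beta, simp)
    qed
  qed
  have ip: "inner W (Lv U) = (\<Sum>i\<in>UNIV. inner (W $ i) (lap adj A (($) U) i))" for W U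
  proof -
    have "inner W (Lv U) = (\<Sum>i\<in>UNIV. inner (W $ i) (Lv U $ i))" by (rule inner_vec_def)
    then show ?thesis by (simp add: Lv_def)
  qed
  have selfadj: "inner W (Lv U) = inner U (Lv W)" for W U
    unfolding ip by (rule lap_props(1)[where adj=adj and A=A, OF sym Asym inv])
  define g :: "real^'n^'v" where "g = (\<chi> i. gradf i (xs i))"
  have step1: "inner g D = 0" if LD: "Lv D = 0" for D
  proof -
    have "(\<Sum>i\<in>UNIV. inner (D $ i) (lap adj A (\<lambda>j. D $ j) i)) = 0"
    proof -
      have "lap adj A (($) D) i = 0" for i using LD unfolding Lv_def by (metis vec_lambda_beta zero_index)
      then show ?thesis by simp
    qed
    then have K: "\<forall>r\<in>set (A i j). inner r (D $ i - D $ j) = 0" if "adj i j" for i j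
      using lap_props(3)[where adj=adj and A=A and u="\<lambda>j. D $ j", OF sym Asym inv] that by blast
    have feas: "feasible adj A b (\<lambda>i. xs i + t *\<^sub>R D $ i)" for t
      unfolding feasible_def
    proof (intro allI impI)
      fix i j assume a: "adj i j"
      have "Amul (A i j) (xs i + t *\<^sub>R D $ i - (xs j + t *\<^sub>R D $ j)) = Amul (A i j) (xs i - xs j)"
        unfolding Amul_def
      proof (rule map_cong[OF refl])
        fix r assume "r \<in> set (A i j)"
        then have "inner r (D $ i - D $ j) = 0" using K[OF a] by blast
        then show "inner r (xs i + t *\<^sub>R D $ i - (xs j + t *\<^sub>R D $ j)) = inner r (xs i - xs j)"
          by (simp add: inner_diff_right inner_add_right algebra_simps)
      qed
      also have "\<dots> = b i j" using sol a unfolding solves_problem_def feasible_def by blast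
      finally show "Amul (A i j) (xs i + t *\<^sub>R D $ i - (xs j + t *\<^sub>R D $ j)) = b i j" .
    qed
    let ?psi = "\<lambda>t. \<Sum>i\<in>UNIV. f i (xs i + t *\<^sub>R D $ i)"
    have der: "(?psi has_real_derivative (\<Sum>i\<in>UNIV. inner (gradf i (xs i + 0 *\<^sub>R D $ i)) (D $ i))) (at 0)"
      by (rule line_deriv[OF grad])
    have mn: "\<forall>y. \<bar>0 - y\<bar> < 1 \<longrightarrow> ?psi 0 \<le> ?psi y"
      using sol feas unfolding solves_problem_def by simp
    have "(\<Sum>i\<in>UNIV. inner (gradf i (xs i + 0 *\<^sub>R D $ i)) (D $ i)) = 0"
      by (rule DERIV_local_min[OF der _ mn]) simp
    then show ?thesis by (simp add: g_def inner_vec_def)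
  qed
  have sub: "subspace (range Lv)"
    by (rule linear_subspace_image[OF lin subspace_UNIV])
  obtain y z where y: "y \<in> span (range Lv)" and z: "\<And>w. w \<in> span (range Lv) \<Longrightarrow> Linear_Algebra.orthogonal z w"
    and dec: "- g = y + z"
    using orthogonal_subspace_decomp_exists[of "range Lv" "- g"] by metis
  have yr: "y \<in> range Lv" using y sub by (metis span_eq_iff)
  have "Linear_Algebra.orthogonal z (Lv w)" for w using z[of "Lv w"] by (simp add: span_base)
  then have "inner (Lv z) (Lv z) = 0" using selfadj[of "Lv z" z] by (simp add: Linear_Algebra.orthogonal_def inner_commute)
  then have "Lv z = 0" by simp
  then have gz: "inner g z = 0" by (rule step1)
  have yz: "inner y z = 0" using z[OF y] by (simp add: Linear_Algebra.orthogonal_def inner_commute)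
  have "inner (- g) z = inner z z" using dec yz by (simp add: inner_add_left)
  then have "z = 0" using gz by simp
  then obtain Y where "- g = Lv Y" using dec yr by auto
  then have "gradf i (xs i) + lap adj A (\<lambda>j. Y $ j) i = 0" for i
    unfolding g_def Lv_def by (simp add: Finite_Cartesian_Product.vec_eq_iff) (metis add.commute neg_eq_iff_add_eq_0)
  then show ?thesis by blast
qed




lemma sq_deriv:
  fixes g :: "real \<Rightarrow> 'a::real_inner"
  assumes "(g has_vector_derivative v) (at t within S)"
  shows "((\<lambda>s. (norm (g s - c))\<^sup>2) has_real_derivative (2 * inner (g t - c) v)) (at t within S)"
proof -
  have d1: "(g has_derivative (\<lambda>h. h *\<^sub>R v)) (at t within S)" using assms by (simp add: has_vector_derivative_def)
  have d2: "((\<lambda>s. g s - c) has_derivative (\<lambda>h. h *\<^sub>R v)) (at t within S)"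
    using has_derivative_diff[OF d1 has_derivative_const[of c]] by simp
  have "((\<lambda>s. inner (g s - c) (g s - c)) has_derivative (\<lambda>h. inner (g t - c) (h *\<^sub>R v) + inner (h *\<^sub>R v) (g t - c))) (at t within S)"
    by (rule has_derivative_inner[OF d2 d2])
  moreover have "(\<lambda>h. inner (g t - c) (h *\<^sub>R v) + inner (h *\<^sub>R v) (g t - c)) = (*) (2 * inner (g t - c) v)"
    by (auto simp: fun_eq_iff inner_commute algebra_simps)
  ultimately show ?thesis by (simp add: has_field_derivative_def power2_norm_eq_inner)
qed

lemma decr:
  fixes V V' :: "real \<Rightarrow> real"
  assumes der: "\<And>s. a \<le> s \<Longrightarrow> (V has_real_derivative V' s) (at s)"
    and bd: "\<And>s. a \<le> s \<Longrightarrow> s \<le> b \<Longrightarrow> V' s \<le> - 2 * c"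
    and ab: "a \<le> b"
  shows "V b + 2 * c * (b - a) \<le> V a"
proof -
  have "(\<lambda>s. V s + 2 * c * s) b \<le> (\<lambda>s. V s + 2 * c * s) a"
  proof (rule DERIV_nonpos_imp_nonincreasing[OF ab])
    fix s assume s: "a \<le> s" "s \<le> b"
    have "((\<lambda>s. V s + 2 * c * s) has_real_derivative (V' s + 2 * c)) (at s)"
      using der[OF s(1)] by (auto intro!: derivative_eq_intros)
    then show "\<exists>y. ((\<lambda>s. V s + 2 * c * s) has_real_derivative y) (at s) \<and> y \<le> 0"
      using bd[OF s] by (intro exI[of _ "V' s + 2 * c"]) auto
  qed
  then show ?thesis by (simp add: algebra_simps)
qed

lemma lip:
  fixes g :: "real \<Rightarrow> 'a::real_normed_vector"
  assumes der: "\<And>s. a \<le> s \<Longrightarrow> (g has_vector_derivative v s) (at s within {a..})"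
    and bd: "\<And>s. a \<le> s \<Longrightarrow> norm (v s) \<le> B"
    and s: "a \<le> s" and t: "a \<le> t"
  shows "norm (g s - g t) \<le> B * \<bar>s - t\<bar>"
proof -
  have "norm (g s - g t) \<le> B * norm (s - t)"
  proof (rule differentiable_bound[of "{a..}" g "\<lambda>s h. h *\<^sub>R v s"])
    show "convex {a..}" by (rule convex_real_interval)
    fix x assume x: "x \<in> {a..}"
    show "(g has_derivative (\<lambda>h. h *\<^sub>R v x)) (at x within {a..})"
      using der[of x] x by (simp add: has_vector_derivative_def)
    have "onorm (\<lambda>h::real. h *\<^sub>R v x) = onorm (\<lambda>h::real. h) * norm (v x)"
      by (rule onorm_scaleR_left[OF bounded_linear_ident])
    then show "onorm (\<lambda>h::real. h *\<^sub>R v x) \<le> B" using bd[of x] x by (simp add: onorm_id)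
  qed (use s t in auto)
  then show ?thesis by simp
qed

lemma Pmul_cont [continuous_intros]: "continuous_on S g \<Longrightarrow> continuous_on S (\<lambda>z. Pmul rs (g z))"
  using bounded_linear.continuous_on[OF Pmul_blin] .



theorem theorem1:
  fixes f :: "'v::finite \<Rightarrow> real^'n \<Rightarrow> real"
    and gradf :: "'v \<Rightarrow> real^'n \<Rightarrow> real^'n"
    and adj :: "'v \<Rightarrow> 'v \<Rightarrow> bool"
    and A :: "'v \<Rightarrow> 'v \<Rightarrow> (real^'n) list"
    and b :: "'v \<Rightarrow> 'v \<Rightarrow> real list"
    and es :: "('v \<times> 'v) list"
    and x lam :: "real \<Rightarrow> 'v \<Rightarrow> real^'n"
  assumes grad: "\<And>i z. (f i has_derivative (\<lambda>h. inner (gradf i z) h)) (at z)"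
    and grad_cont: "\<And>i. continuous_on UNIV (gradf i)"
    and convex: "\<And>i. convex_on UNIV (f i)"
    and strict: "strict_convex_fun (\<lambda>X :: real^'n^'v. \<Sum>i\<in>UNIV. f i (X $ i))"
    and sym: "\<And>i j. adj i j \<Longrightarrow> adj j i"
    and irrefl: "\<And>i. \<not> adj i i"
    and dims: "\<And>i j. adj i j \<Longrightarrow> length (b i j) = length (A i j)"
    and gram_inv: "\<And>i j. adj i j \<Longrightarrow> invertible_mat (gram (A i j))"
    and existence: "\<exists>xs. solves_problem f adj A b xs"
    and consistency: "\<And>i j. adj i j \<Longrightarrow> A i j = A j i \<and> b i j = map uminus (b j i)"
    and connected: "connected_graph adj"
    and orient: "orientation adj es"
    and wellconf: "well_configured es A"
    and ode_x: "\<And>t i. t \<ge> 0 \<Longrightarrow> ((\<lambda>s. x s i) has_vector_derivative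
        (- gradf i (x t i)
         - (\<Sum>j\<in>{j. adj i j}. Pmul (A i j) (lam t i - lam t j))
         - (\<Sum>j\<in>{j. adj i j}. Pmul (A i j) (x t i - x t j) - bbar (A i j) (b i j)))) (at t within {0..})"
    and ode_lam: "\<And>t i. t \<ge> 0 \<Longrightarrow> ((\<lambda>s. lam s i) has_vector_derivative
        (\<Sum>j\<in>{j. adj i j}. Pmul (A i j) (x t i - x t j) - bbar (A i j) (b i j))) (at t within {0..})"
  shows "\<exists>xstar. (\<forall>i. ((\<lambda>t. x t i) \<longlongrightarrow> xstar i) at_top) \<and> solves_problem f adj A b xstar"
proof -
  obtain xs where sol: "solves_problem f adj A b xs" using existence by blast
  have Asym: "\<And>i j. adj i j \<Longrightarrow> A i j = A j i" using consistency by blast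
  obtain ls where ls: "\<And>i. gradf i (xs i) + lap adj A ls i = 0"
    using kkt[OF grad sym Asym gram_inv sol] by blast
  have feas: "\<And>i j. adj i j \<Longrightarrow> Amul (A i j) (xs i - xs j) = b i j"
    using sol unfolding solves_problem_def feasible_def by blast
  have bb: "\<And>i j. adj i j \<Longrightarrow> bbar (A i j) (b i j) = Pmul (A i j) (xs i - xs j)"
    using feas by (simp add: Pmul_def bbar_def)
  define e where "e t k = x t k - xs k" for t k
  define mu where "mu t k = lam t k - ls k" for t k
  define vx where "vx t i = - (gradf i (x t i) - gradf i (xs i)) - lap adj A (mu t) i - lap adj A (e t) i" for t i
  define vl where "vl t i = lap adj A (e t) i" for t i
  have R1: "(\<Sum>j\<in>{j. adj i j}. Pmul (A i j) (x t i - x t j) - bbar (A i j) (b i j)) = lap adj A (e t) i" for t i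
    unfolding lap_def e_def
  proof (intro sum.cong refl)
    fix j assume "j \<in> {j. adj i j}"
    then have a: "adj i j" by simp
    have "x t i - xs i - (x t j - xs j) = (x t i - x t j) - (xs i - xs j)" by (simp add: algebra_simps)
    then show "Pmul (A i j) (x t i - x t j) - bbar (A i j) (b i j) = Pmul (A i j) (x t i - xs i - (x t j - xs j))"
      by (simp only: bb[OF a] Pmul_diff)
  qed
  have R2: "(\<Sum>j\<in>{j. adj i j}. Pmul (A i j) (lam t i - lam t j)) = lap adj A (mu t) i - gradf i (xs i)" for t i
  proof -
    have "lap adj A (mu t) i = lap adj A (lam t) i - lap adj A ls i" unfolding mu_def by (rule lap_diff)
    moreover have "lap adj A ls i = - gradf i (xs i)" using ls[of i] by (simp add: eq_neg_iff_add_eq_0 add.commute)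
    ultimately show ?thesis by (simp add: lap_def)
  qed
  have dx: "((\<lambda>s. x s i) has_vector_derivative vx t i) (at t within {0..})" if t: "t \<ge> 0" for t i
  proof -
    have "- gradf i (x t i) - (\<Sum>j\<in>{j. adj i j}. Pmul (A i j) (lam t i - lam t j))
         - (\<Sum>j\<in>{j. adj i j}. Pmul (A i j) (x t i - x t j) - bbar (A i j) (b i j)) = vx t i"
      unfolding R1 R2 vx_def by (simp add: algebra_simps)
    then show ?thesis using ode_x[OF t, of i] by simp
  qed
  have dl: "((\<lambda>s. lam s i) has_vector_derivative vl t i) (at t within {0..})" if t: "t \<ge> 0" for t i
    using ode_lam[OF t, of i] unfolding R1 vl_def .
  define V where "V t = (\<Sum>i\<in>UNIV. (norm (x t i - xs i))\<^sup>2 + (norm (lam t i - ls i))\<^sup>2)" for t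
  define V' where "V' t = (\<Sum>i\<in>UNIV. 2 * inner (x t i - xs i) (vx t i) + 2 * inner (lam t i - ls i) (vl t i))" for t
  define W where "W t = (\<Sum>i\<in>UNIV. inner (e t i) (gradf i (x t i) - gradf i (xs i)))" for t
  have dV0: "(V has_real_derivative V' t) (at t within {0..})" if t: "t \<ge> 0" for t
    unfolding V_def V'_def
    by (intro DERIV_sum DERIV_add sq_deriv dx dl t)
  have dV: "(V has_real_derivative V' t) (at t)" if t: "t > 0" for t
  proof -
    have "at t within {0..} = at t" using t by (intro at_within_interior) simp
    then show ?thesis using dV0[of t] t by simp
  qed
  have Wnn: "0 \<le> W t" for t
    using grad_mono(1)[OF grad strict, where p=xs and q="x t"] by (simp add: W_def e_def)
  have V'W: "V' t \<le> - 2 * W t" for t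
  proof -
    let ?S = "\<lambda>u w. (\<Sum>i\<in>UNIV. inner (u i) (lap adj A w i))"
    have S1: "(\<Sum>i\<in>UNIV. inner (e t i) (vx t i)) = - W t - ?S (e t) (mu t) - ?S (e t) (e t)"
      by (simp add: vx_def W_def inner_diff_right sum_subtractf sum_negf)
    have S2: "(\<Sum>i\<in>UNIV. inner (mu t i) (vl t i)) = ?S (e t) (mu t)"
      unfolding vl_def by (rule lap_props(1)[where adj=adj and A=A, OF sym Asym gram_inv])
    have S3: "0 \<le> ?S (e t) (e t)" by (rule lap_props(2)[where adj=adj and A=A, OF sym Asym gram_inv])
    have "V' t = 2 * (\<Sum>i\<in>UNIV. inner (e t i) (vx t i)) + 2 * (\<Sum>i\<in>UNIV. inner (mu t i) (vl t i))"
      by (simp add: V'_def e_def mu_def sum.distrib sum_distrib_left)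
    then show ?thesis using S1 S2 S3 by simp
  qed
  have Vdec: "V b \<le> V a" if "1 \<le> a" "a \<le> b" for a b
  proof -
    have "V b + 2 * 0 * (b - a) \<le> V a"
    proof (rule decr[of a V V' b 0])
      show "\<And>s. a \<le> s \<Longrightarrow> (V has_real_derivative V' s) (at s)" using dV that by simp
      show "\<And>s. a \<le> s \<Longrightarrow> s \<le> b \<Longrightarrow> V' s \<le> - 2 * 0"
      proof -
        fix s show "V' s \<le> - 2 * 0" using V'W[of s] Wnn[of s] by linarith
      qed
    qed (use that in simp)
    then show ?thesis by simp
  qed
  have V1: "V s \<le> V 1" if "s \<ge> 1" for s using Vdec[of 1 s] that by simp
  have Vnn: "0 \<le> V t" for t unfolding V_def by (intro sum_nonneg) auto
  define R where "R = sqrt (V 1)"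
  define XS :: "real^'n^'v" where "XS = (\<chi> k. xs k)"
  define LS :: "real^'n^'v" where "LS = (\<chi> k. ls k)"
  define X :: "real \<Rightarrow> real^'n^'v" where "X t = (\<chi> k. x t k)" for t
  define L :: "real \<Rightarrow> real^'n^'v" where "L t = (\<chi> k. lam t k)" for t
  have nX: "norm (X s - XS) \<le> R" if "s \<ge> 1" for s
  proof -
    have "norm (X s - XS) = sqrt (\<Sum>k\<in>UNIV. (norm (x s k - xs k))\<^sup>2)"
      by (simp add: norm_vec_def L2_set_def X_def XS_def)
    also have "\<dots> \<le> sqrt (V s)" unfolding V_def
      by (intro real_sqrt_le_mono sum_mono) auto
    also have "\<dots> \<le> R" unfolding R_def using V1[OF that] by simp
    finally show ?thesis .
  qed
  have nL: "norm (L s - LS) \<le> R" if "s \<ge> 1" for s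
  proof -
    have "norm (L s - LS) = sqrt (\<Sum>k\<in>UNIV. (norm (lam s k - ls k))\<^sup>2)"
      by (simp add: norm_vec_def L2_set_def L_def LS_def)
    also have "\<dots> \<le> sqrt (V s)" unfolding V_def
      by (intro real_sqrt_le_mono sum_mono) auto
    also have "\<dots> \<le> R" unfolding R_def using V1[OF that] by simp
    finally show ?thesis .
  qed
  have vbound: "\<exists>B>0. \<forall>s\<ge>1. norm (vx s i) \<le> B" for i
  proof -
    define Phi where "Phi Z = - (gradf i (fst Z $ i) - gradf i (xs i)) - lap adj A (\<lambda>k. snd Z $ k - ls k) i
        - lap adj A (\<lambda>k. fst Z $ k - xs k) i" for Z :: "(real^'n^'v) \<times> (real^'n^'v)"
    have gc: "continuous_on UNIV (\<lambda>Z::(real^'n^'v) \<times> (real^'n^'v). gradf i (fst Z $ i))"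
      by (rule continuous_on_compose2[OF grad_cont[of i]]) (auto intro!: continuous_intros)
    have cont: "continuous_on UNIV Phi" unfolding Phi_def lap_def
      by (intro continuous_intros gc)
    let ?C = "cball XS R \<times> cball LS R"
    have "compact ?C" by (intro compact_Times compact_cball)
    then have "bounded (Phi ` ?C)"
      by (intro compact_imp_bounded compact_continuous_image continuous_on_subset[OF cont]) auto
    then obtain B where B: "\<forall>y\<in>Phi ` ?C. norm y \<le> B" by (auto simp: bounded_iff)
    have ph: "vx s i = Phi (X s, L s)" for s
    proof -
      have m: "mu s = (\<lambda>k. lam s k - ls k)" by (rule ext) (simp add: mu_def)
      have ee: "e s = (\<lambda>k. x s k - xs k)" by (rule ext) (simp add: e_def)
      show ?thesis by (simp only: Phi_def vx_def X_def L_def vec_lambda_beta fst_conv snd_conv m ee)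
    qed
    have inC: "(X s, L s) \<in> ?C" if "s \<ge> 1" for s
      using nX[OF that] nL[OF that] by (simp add: dist_norm norm_minus_commute)
    have "norm (vx s i) \<le> B" if "s \<ge> 1" for s
      using B inC[OF that] ph[of s] by (metis image_eqI)
    then have "\<forall>s\<ge>1. norm (vx s i) \<le> max B 1" by (auto intro: order_trans[OF _ max.cobounded1])
    then show ?thesis by (intro exI[of _ "max B 1"]) auto
  qed
  have conv: "((\<lambda>t. x t i) \<longlongrightarrow> xs i) at_top" for i
  proof (rule ccontr)
    assume nc: "\<not> ?thesis"
    then obtain eps where eps: "eps > 0" and fr: "\<forall>N. \<exists>t\<ge>N. eps \<le> dist (x t i) (xs i)"
      unfolding tendsto_iff eventually_at_top_linorder by (auto simp: not_less)
    obtain B where B: "B > 0" "\<forall>s\<ge>1. norm (vx s i) \<le> B" using vbound by blast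
    define del where "del = eps / (2*B)"
    have del: "del > 0" "B * del = eps/2" using eps B by (auto simp: del_def)
    define Wv where "Wv Y = (\<Sum>k\<in>UNIV. inner (Y$k - xs k) (gradf k (Y$k) - gradf k (xs k)))" for Y :: "real^'n^'v"
    define K where "K = cball XS R \<inter> {Y. eps/2 \<le> dist (Y$i) (xs i)}"
    have Kc: "compact K" unfolding K_def
      by (intro compact_Int_closed compact_cball closed_Collect_le continuous_intros)
    have gck: "continuous_on K (\<lambda>Y::real^'n^'v. gradf k (Y $ k))" for k
      by (rule continuous_on_compose2[OF grad_cont[of k]]) (auto intro!: continuous_intros)
    have Wvc: "continuous_on K Wv" unfolding Wv_def
      by (intro continuous_intros gck)
    have Wpos: "0 < Wv Y" if "Y \<in> K" for Y
    proof -
      have "eps/2 \<le> dist (Y$i) (xs i)" using that by (simp add: K_def)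
      then have "dist (Y$i) (xs i) > 0" using eps by linarith
      then have "(\<lambda>k. Y$k) \<noteq> xs" by auto
      then show ?thesis using grad_mono(2)[OF grad strict, where p=xs and q="\<lambda>k. Y$k"]
        by (simp add: Wv_def)
    qed
    obtain c where c: "c > 0" "\<forall>Y\<in>K. c \<le> Wv Y"
    proof (cases "K = {}")
      case True then show ?thesis using that[of 1] by auto
    next
      case False
      from continuous_attains_inf[OF Kc False Wvc] obtain Y0 where "Y0 \<in> K" "\<forall>Y\<in>K. Wv Y0 \<le> Wv Y"
        by blast
      then show ?thesis using that[of "Wv Y0"] Wpos by auto
    qed
    have WK: "c \<le> W s" if "s \<ge> 1" "eps/2 \<le> dist (x s i) (xs i)" for s
    proof -
      have "X s \<in> K" using nX[OF that(1)] that(2)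
        by (simp add: K_def X_def XS_def dist_norm norm_minus_commute)
      then have "c \<le> Wv (X s)" using c by blast
      also have "Wv (X s) = W s" by (simp add: Wv_def W_def X_def e_def)
      finally show ?thesis .
    qed
    define I where "I = Inf (V ` {1..})"
    have bdd: "bdd_below (V ` {1..})" using Vnn by (intro bdd_belowI[of _ 0]) auto
    have IleV: "I \<le> V s" if "s \<ge> 1" for s unfolding I_def using bdd that by (auto intro: cInf_lower)
    obtain T where T: "T \<ge> 1" "V T < I + c * del"
    proof -
      have "I < I + c * del" using c del by simp
      then have "\<exists>v\<in>V ` {1..}. v < I + c * del"
        using cInf_less_iff[of "V ` {1..}" "I + c * del"] bdd unfolding I_def by auto
      then show ?thesis using that by auto
    qed
    obtain t where t: "t \<ge> T" "eps \<le> dist (x t i) (xs i)" using fr by blast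
    have t1: "t \<ge> 1" using t T by simp
    have dx1: "((\<lambda>s. x s i) has_vector_derivative vx s i) (at s within {1..})" if "1 \<le> s" for s
      using has_vector_derivative_within_subset[OF dx[of s i]] that by auto
    have far: "c \<le> W s" if s: "t \<le> s" "s \<le> t + del" for s
    proof -
      have s1: "1 \<le> s" using s t1 by linarith
      have d1: "\<And>u. 1 \<le> u \<Longrightarrow> ((\<lambda>s. x s i) has_vector_derivative vx u i) (at u within {1..})"
        using dx1 by blast
      have b1: "\<And>u. 1 \<le> u \<Longrightarrow> norm (vx u i) \<le> B" using B(2) by blast
      have "norm (x s i - x t i) \<le> B * \<bar>s - t\<bar>"
        using lip[of 1 "\<lambda>s. x s i" "\<lambda>s. vx s i" B s t, OF d1 b1 s1 t1] by simp
      also have "\<dots> \<le> B * del"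
      proof (rule mult_left_mono)
        show "\<bar>s - t\<bar> \<le> del" using s by linarith
      qed (use B(1) in linarith)
      finally have "dist (x s i) (x t i) \<le> eps/2" using del(2) by (simp add: dist_norm)
      moreover have "dist (x t i) (xs i) \<le> dist (x t i) (x s i) + dist (x s i) (xs i)" by (rule dist_triangle)
      moreover have "dist (x t i) (x s i) = dist (x s i) (x t i)" by (rule dist_commute)
      ultimately have "eps/2 \<le> dist (x s i) (xs i)" using t(2) by linarith
      then show ?thesis using WK s1 by blast
    qed
    have "V (t + del) + 2 * c * ((t + del) - t) \<le> V t"
    proof (rule decr[of t V V' "t + del" c])
      show "\<And>s. t \<le> s \<Longrightarrow> (V has_real_derivative V' s) (at s)" using dV t1 by simp
      show "\<And>s. t \<le> s \<Longrightarrow> s \<le> t + del \<Longrightarrow> V' s \<le> - 2 * c"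
      proof -
        fix s assume "t \<le> s" "s \<le> t + del"
        then show "V' s \<le> - 2 * c" using V'W[of s] far[of s] by linarith
      qed
    qed (use del(1) in linarith)
    moreover have "V t \<le> V T" using Vdec[of T t] T t by simp
    moreover have "I \<le> V (t + del)" using IleV[of "t + del"] t1 del by simp
    moreover have "0 < c * del" using c(1) del(1) by simp
    moreover have "2 * c * (t + del - t) = 2 * (c * del)" by simp
    ultimately show False using T(2) by linarith
  qed
  show ?thesis using conv sol by blast
qed

end
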